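(* Let $R$ be a left PBW ring over the skew field $\mathbb D$ in $x_1,\dots,x_n$ with respect to an admissible ordering $\preceq$. Then the standard monomials $\{\mathbf x^{\alpha}:\alpha\in\mathbb N^n\}$ also form a basis of $R$ as a right $\mathbb D$-vector space (i.e. $R$ is a PBW ring) if and only if for each $i=1,\dots,n$ the map $(-)^{\epsilon_i}:\mathbb D\to\mathbb D$ is an automorphism of $\mathbb D$.
   Context: Let $R$ be a ring containing a skew field $\mathbb D$ and elements $x_1,\dots,x_n$; write $\mathbf x^\alpha=x_1^{\alpha_1}\cdots x_n^{\alpha_n}$ for $\alpha\in\mathbb N^n$. $R$ is left polynomial over $\mathbb D$ in $x_1,\dots,x_n$ if $\{\mathbf x^\alpha\}$ is a basis of $R$ as a left $\mathbb D$-vector space, so each $f$ has a unique standard representation $f=\sum c_\alpha\mathbf x^\alpha$; $\mathcal N(f)=\{\alpha:c_\alpha\ne0\}$. A total order $\preceq$ on $\mathbb N^n$ is admissible if $0\preceq\alpha$ for all $\alpha$ and $\alpha\preceq\beta\Rightarrow\alpha+\gamma\preceq\beta+\gamma$. $\exp(f)=\max_\preceq\mathcal N(f)$ for $f\ne0$, $\exp(0)=-\infty$. $R$ is a left PBW ring with respect to $\preceq$ if it is left polynomial and $\exp(fg)=\exp(f)+\exp(g)$ for all $f,g\in R$. $\epsilon_i\in\mathbb N^n$ is the $i$-th unit vector. In a left PBW ring, for $0\ne a\in\mathbb D$, $a^{\epsilon_i}$ denotes the (nonzero) coefficient of $\mathbf x^{\epsilon_i}=x_i$ in the standard representation of $x_ia$,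 so $x_ia=a^{\epsilon_i}x_i+p$ with $\exp(p)\prec\epsilon_i$; set $0^{\epsilon_i}=0$. The map $a\mapsto a^{\epsilon_i}$ is a ring endomorphism of $\mathbb D$. *)

theory Defs
  imports Main
begin

text \<open>Exponent vectors in N^n are functions nat => nat vanishing at indices >= n;
  variables are indexed x 0, ..., x (n-1).\<close>

definition expvecs :: "nat \<Rightarrow> (nat \<Rightarrow> nat) set" where
  "expvecs n = {\<alpha>. \<forall>i\<ge>n. \<alpha> i = 0}"

definition vadd :: "(nat \<Rightarrow> nat) \<Rightarrow> (nat \<Rightarrow> nat) \<Rightarrow> (nat \<Rightarrow> nat)" where
  "vadd \<alpha> \<beta> = (\<lambda>i. \<alpha> i + \<beta> i)"

definition vzero :: "nat \<Rightarrow> nat" where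
  "vzero = (\<lambda>_. 0)"

definition unitvec :: "nat \<Rightarrow> (nat \<Rightarrow> nat)" where
  "unitvec i = (\<lambda>j. if j = i then 1 else 0)"

definition monom :: "(nat \<Rightarrow> 'a::ring_1) \<Rightarrow> nat \<Rightarrow> (nat \<Rightarrow> nat) \<Rightarrow> 'a" where
  "monom x n \<alpha> = prod_list (map (\<lambda>i. x i ^ \<alpha> i) [0..<n])"

definition division_subring :: "'a::ring_1 set \<Rightarrow> bool" where
  "division_subring D \<longleftrightarrow> 0 \<in> D \<and> 1 \<in> D \<and>
     (\<forall>a\<in>D. \<forall>b\<in>D. a + b \<in> D \<and> a - b \<in> D \<and> a * b \<in> D) \<and>
     (\<forall>a\<in>D. a \<noteq> 0 \<longrightarrow> (\<exists>b\<in>D. a * b = 1 \<and> b * a = 1))"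

definition coeff_fams :: "'a::ring_1 set \<Rightarrow> nat \<Rightarrow> ((nat \<Rightarrow> nat) \<Rightarrow> 'a) set" where
  "coeff_fams D n = {c. (\<forall>\<alpha>. c \<alpha> \<in> D) \<and> (\<forall>\<alpha>. \<alpha> \<notin> expvecs n \<longrightarrow> c \<alpha> = 0)
                       \<and> finite {\<alpha>. c \<alpha> \<noteq> 0}}"

definition lsum :: "(nat \<Rightarrow> 'a::ring_1) \<Rightarrow> nat \<Rightarrow> ((nat \<Rightarrow> nat) \<Rightarrow> 'a) \<Rightarrow> 'a" where
  "lsum x n c = (\<Sum>\<alpha>\<in>{\<alpha>. c \<alpha> \<noteq> 0}. c \<alpha> * monom x n \<alpha>)"

definition rsum :: "(nat \<Rightarrow> 'a::ring_1) \<Rightarrow> nat \<Rightarrow> ((nat \<Rightarrow> nat) \<Rightarrow> 'a) \<Rightarrow> 'a" where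
  "rsum x n c = (\<Sum>\<alpha>\<in>{\<alpha>. c \<alpha> \<noteq> 0}. monom x n \<alpha> * c \<alpha>)"

definition left_polynomial :: "'a::ring_1 set \<Rightarrow> (nat \<Rightarrow> 'a) \<Rightarrow> nat \<Rightarrow> bool" where
  "left_polynomial D x n \<longleftrightarrow> (\<forall>f. \<exists>!c. c \<in> coeff_fams D n \<and> f = lsum x n c)"

definition right_polynomial :: "'a::ring_1 set \<Rightarrow> (nat \<Rightarrow> 'a) \<Rightarrow> nat \<Rightarrow> bool" where
  "right_polynomial D x n \<longleftrightarrow> (\<forall>f. \<exists>!c. c \<in> coeff_fams D n \<and> f = rsum x n c)"

definition lcoeff :: "'a::ring_1 set \<Rightarrow> (nat \<Rightarrow> 'a) \<Rightarrow> nat \<Rightarrow> 'a \<Rightarrow> (nat \<Rightarrow> nat) \<Rightarrow> 'a" where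
  "lcoeff D x n f = (THE c. c \<in> coeff_fams D n \<and> f = lsum x n c)"

definition newton :: "'a::ring_1 set \<Rightarrow> (nat \<Rightarrow> 'a) \<Rightarrow> nat \<Rightarrow> 'a \<Rightarrow> (nat \<Rightarrow> nat) set" where
  "newton D x n f = {\<alpha>. lcoeff D x n f \<alpha> \<noteq> 0}"

definition admissible :: "nat \<Rightarrow> ((nat \<Rightarrow> nat) \<Rightarrow> (nat \<Rightarrow> nat) \<Rightarrow> bool) \<Rightarrow> bool" where
  "admissible n le \<longleftrightarrow>
     (\<forall>\<alpha>\<in>expvecs n. le \<alpha> \<alpha>) \<and>
     (\<forall>\<alpha>\<in>expvecs n. \<forall>\<beta>\<in>expvecs n. le \<alpha> \<beta> \<and> le \<beta> \<alpha> \<longrightarrow> \<alpha> = \<beta>) \<and>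
     (\<forall>\<alpha>\<in>expvecs n. \<forall>\<beta>\<in>expvecs n. \<forall>\<gamma>\<in>expvecs n. le \<alpha> \<beta> \<and> le \<beta> \<gamma> \<longrightarrow> le \<alpha> \<gamma>) \<and>
     (\<forall>\<alpha>\<in>expvecs n. \<forall>\<beta>\<in>expvecs n. le \<alpha> \<beta> \<or> le \<beta> \<alpha>) \<and>
     (\<forall>\<alpha>\<in>expvecs n. le vzero \<alpha>) \<and>
     (\<forall>\<alpha>\<in>expvecs n. \<forall>\<beta>\<in>expvecs n. \<forall>\<gamma>\<in>expvecs n.
        le \<alpha> \<beta> \<longrightarrow> le (vadd \<alpha> \<gamma>) (vadd \<beta> \<gamma>))"

text \<open>exp(f) = max of N(f) w.r.t. le (meaningful for f nonzero).\<close>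
definition lexp :: "'a::ring_1 set \<Rightarrow> (nat \<Rightarrow> 'a) \<Rightarrow> nat \<Rightarrow> ((nat \<Rightarrow> nat) \<Rightarrow> (nat \<Rightarrow> nat) \<Rightarrow> bool)
                      \<Rightarrow> 'a \<Rightarrow> (nat \<Rightarrow> nat)" where
  "lexp D x n le f = (THE \<alpha>. \<alpha> \<in> newton D x n f \<and> (\<forall>\<beta>\<in>newton D x n f. le \<beta> \<alpha>))"

text \<open>Left PBW ring. The condition exp(fg) = exp(f) + exp(g) with exp(0) = -infinity
  is trivial if f = 0 or g = 0, and for f, g nonzero it says fg is nonzero and the
  (finite) leading exponents add.\<close>
definition left_PBW :: "'a::ring_1 set \<Rightarrow> (nat \<Rightarrow> 'a) \<Rightarrow> nat \<Rightarrow>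
                         ((nat \<Rightarrow> nat) \<Rightarrow> (nat \<Rightarrow> nat) \<Rightarrow> bool) \<Rightarrow> bool" where
  "left_PBW D x n le \<longleftrightarrow> division_subring D \<and> left_polynomial D x n \<and> admissible n le \<and>
     (\<forall>f g. f \<noteq> 0 \<longrightarrow> g \<noteq> 0 \<longrightarrow>
        f * g \<noteq> 0 \<and> lexp D x n le (f * g) = vadd (lexp D x n le f) (lexp D x n le g))"

text \<open>a^{eps_i}: coefficient of x_i = x^{eps_i} in the standard representation of x_i a.\<close>
definition twist :: "'a::ring_1 set \<Rightarrow> (nat \<Rightarrow> 'a) \<Rightarrow> nat \<Rightarrow> nat \<Rightarrow> 'a \<Rightarrow> 'a" where
  "twist D x n i a = lcoeff D x n (x i * a) (unitvec i)"

definition ring_automorphism_on :: "'a::ring_1 set \<Rightarrow> ('a \<Rightarrow> 'a) \<Rightarrow> bool" where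
  "ring_automorphism_on D \<sigma> \<longleftrightarrow>
     (\<forall>a\<in>D. \<forall>b\<in>D. \<sigma> (a + b) = \<sigma> a + \<sigma> b \<and> \<sigma> (a * b) = \<sigma> a * \<sigma> b) \<and>
     \<sigma> 1 = 1 \<and> bij_betw \<sigma> D D"

end

theory Submission
  imports Defs Complex_Main
begin


lemma nat_incsub:
  fixes s :: "nat \<Rightarrow> nat"
  shows "\<exists>r::nat\<Rightarrow>nat. strict_mono r \<and> (\<forall>k l. k \<le> l \<longrightarrow> s (r k) \<le> s (r l))"
proof -
  obtain r :: "nat \<Rightarrow> nat" where r: "strict_mono r" "monoseq (\<lambda>k. s (r k))" using seq_monosub by blast
  show ?thesis
  proof (cases "incseq (\<lambda>k. s (r k))")
    case True
    then have "strict_mono r \<and> (\<forall>k l. k \<le> l \<longrightarrow> s (r k) \<le> s (r l))"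
      using r by (simp add: incseq_def)
    then show ?thesis by blast
  next
    case False
    then have dec: "decseq (\<lambda>k. s (r k))" using r(2) monoseq_iff by blast
    define m where "m = (LEAST v. \<exists>k. s (r k) = v)"
    have "\<exists>k. s (r k) = m" unfolding m_def by (rule LeastI[of _ "s (r 0)"]) blast
    then obtain N where N: "s (r N) = m" by blast
    have mle: "m \<le> s (r k)" for k unfolding m_def by (rule Least_le) blast
    have const: "s (r (k + N)) = m" for k
    proof -
      have "s (r (k + N)) \<le> s (r N)" using dec unfolding decseq_def by simp
      then show ?thesis using mle[of "k+N"] N by simp
    qed
    have "strict_mono (\<lambda>k. r (k + N)) \<and> (\<forall>k l. k \<le> l \<longrightarrow> s (r (k + N)) \<le> s (r (l + N)))"
      using r(1) const by (simp add: strict_mono_def)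
    then show ?thesis by blast
  qed
qed

lemma dickson_sub:
  fixes s :: "nat \<Rightarrow> nat \<Rightarrow> nat"
  shows "\<exists>r::nat\<Rightarrow>nat. strict_mono r \<and> (\<forall>k l. k \<le> l \<longrightarrow> (\<forall>i<m. s (r k) i \<le> s (r l) i))"
proof (induction m)
  case 0
  have "strict_mono (\<lambda>k::nat. k)" by (simp add: strict_mono_def)
  then show ?case by blast
next
  case (Suc m)
  then obtain r :: "nat \<Rightarrow> nat" where r: "strict_mono r" "\<forall>k l. k \<le> l \<longrightarrow> (\<forall>i<m. s (r k) i \<le> s (r l) i)"
    by blast
  obtain r2 :: "nat \<Rightarrow> nat" where r2: "strict_mono r2" "\<forall>k l. k \<le> l \<longrightarrow> s (r (r2 k)) m \<le> s (r (r2 l)) m"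
    using nat_incsub[of "\<lambda>k. s (r k) m"] by blast
  have "strict_mono (\<lambda>k. r (r2 k))" using r(1) r2(1) by (rule strict_mono_compose)
  moreover have "\<forall>k l. k \<le> l \<longrightarrow> (\<forall>i<Suc m. s (r (r2 k)) i \<le> s (r (r2 l)) i)"
  proof (intro allI impI)
    fix k l i :: nat assume kl: "k \<le> l" and i: "i < Suc m"
    have "r2 k \<le> r2 l" using r2(1) kl by (simp add: strict_mono_less_eq)
    then show "s (r (r2 k)) i \<le> s (r (r2 l)) i"
    proof (cases "i = m")
      case True then show ?thesis using r2(2) kl by simp
    next
      case False then have "i < m" using i by simp
      then show ?thesis using r(2) \<open>r2 k \<le> r2 l\<close> by blast
    qed
  qed
  ultimately show ?case by blast
qed

lemma dickson:
  fixes s :: "nat \<Rightarrow> nat \<Rightarrow> nat"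
  shows "\<exists>k l::nat. k < l \<and> (\<forall>i<m. s k i \<le> s l i)"
proof -
  obtain r :: "nat \<Rightarrow> nat" where r: "strict_mono r" "\<forall>k l. k \<le> l \<longrightarrow> (\<forall>i<m. s (r k) i \<le> s (r l) i)"
    using dickson_sub by blast
  have "r 0 < r 1" using r(1) by (simp add: strict_mono_def)
  then show ?thesis using r(2) by (metis zero_le_one)
qed



lemma monom_unit_aux:
  "prod_list (map (\<lambda>j. (x::nat\<Rightarrow>'a::ring_1) j ^ unitvec i j) [0..<m]) = (if i < m then x i else 1)"
  by (induction m) (auto simp: unitvec_def less_Suc_eq)

lemma monom_zero_aux:
  "prod_list (map (\<lambda>j. (x::nat\<Rightarrow>'a::ring_1) j ^ vzero j) [0..<m]) = 1"
  by (induction m) (auto simp: vzero_def)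

locale lpbw =
  fixes D :: "'a::ring_1 set" and x :: "nat \<Rightarrow> 'a" and n :: nat
    and le :: "(nat \<Rightarrow> nat) \<Rightarrow> (nat \<Rightarrow> nat) \<Rightarrow> bool"
  assumes pbw: "left_PBW D x n le"
    and nontriv: "(1::'a) \<noteq> 0"
begin

abbreviation "CF \<equiv> coeff_fams D n"
abbreviation "E \<equiv> expvecs n"
abbreviation "lc \<equiv> lcoeff D x n"
abbreviation "mon \<equiv> monom x n"
abbreviation "lx \<equiv> lexp D x n le"

lemma divD: "division_subring D" and lp: "left_polynomial D x n" and adm: "admissible n le"
  and multax: "\<And>f g. f \<noteq> 0 \<Longrightarrow> g \<noteq> 0 \<Longrightarrow> f * g \<noteq> 0 \<and> lx (f * g) = vadd (lx f) (lx g)"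
  using pbw unfolding left_PBW_def by auto

lemma zero_D: "0 \<in> D" and one_D: "1 \<in> D"
  and add_D: "a \<in> D \<Longrightarrow> b \<in> D \<Longrightarrow> a + b \<in> D"
  and diff_D: "a \<in> D \<Longrightarrow> b \<in> D \<Longrightarrow> a - b \<in> D"
  and mult_D: "a \<in> D \<Longrightarrow> b \<in> D \<Longrightarrow> a * b \<in> D"
  using divD unfolding division_subring_def by auto

lemma le_refl: "\<alpha> \<in> E \<Longrightarrow> le \<alpha> \<alpha>"
  and le_antisym: "\<alpha> \<in> E \<Longrightarrow> \<beta> \<in> E \<Longrightarrow> le \<alpha> \<beta> \<Longrightarrow> le \<beta> \<alpha> \<Longrightarrow> \<alpha> = \<beta>"
  and le_trans: "\<alpha> \<in> E \<Longrightarrow> \<beta> \<in> E \<Longrightarrow> \<gamma> \<in> E \<Longrightarrow> le \<alpha> \<beta> \<Longrightarrow> le \<beta> \<gamma> \<Longrightarrow> le \<alpha> \<gamma>"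
  and le_total: "\<alpha> \<in> E \<Longrightarrow> \<beta> \<in> E \<Longrightarrow> le \<alpha> \<beta> \<or> le \<beta> \<alpha>"
  and le_zero: "\<alpha> \<in> E \<Longrightarrow> le vzero \<alpha>"
  and le_add: "\<alpha> \<in> E \<Longrightarrow> \<beta> \<in> E \<Longrightarrow> \<gamma> \<in> E \<Longrightarrow> le \<alpha> \<beta> \<Longrightarrow> le (vadd \<alpha> \<gamma>) (vadd \<beta> \<gamma>)"
  using adm unfolding admissible_def by blast+

lemma vzero_E: "vzero \<in> E" by (simp add: expvecs_def vzero_def)
lemma unitvec_E: "i < n \<Longrightarrow> unitvec i \<in> E" by (simp add: expvecs_def unitvec_def)
lemma vadd_E: "\<alpha> \<in> E \<Longrightarrow> \<beta> \<in> E \<Longrightarrow> vadd \<alpha> \<beta> \<in> E" by (simp add: expvecs_def vadd_def)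
lemma vadd_zero: "vadd \<alpha> vzero = \<alpha>" by (simp add: vadd_def vzero_def)
lemma vadd_comm: "vadd \<alpha> \<beta> = vadd \<beta> \<alpha>" by (auto simp: vadd_def)
lemma vadd_cancel: "vadd \<alpha> \<gamma> = vadd \<beta> \<gamma> \<Longrightarrow> \<alpha> = \<beta>"
  by (rule ext) (metis add_right_cancel vadd_def)

lemma mon_unit: "i < n \<Longrightarrow> mon (unitvec i) = x i"
  unfolding monom_def by (simp add: monom_unit_aux)
lemma mon_zero: "mon vzero = 1"
  unfolding monom_def by (simp add: monom_zero_aux)

definition supp :: "((nat \<Rightarrow> nat) \<Rightarrow> 'a) \<Rightarrow> (nat \<Rightarrow> nat) set" where
  "supp c = {\<alpha>. c \<alpha> \<noteq> 0}"

lemma CF_D: "c \<in> CF \<Longrightarrow> c \<alpha> \<in> D" and CF_E: "c \<in> CF \<Longrightarrow> c \<alpha> \<noteq> 0 \<Longrightarrow> \<alpha> \<in> E"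
  and CF_fin: "c \<in> CF \<Longrightarrow> finite (supp c)"
  unfolding coeff_fams_def supp_def by auto

lemma lsum_sup: "finite S \<Longrightarrow> supp c \<subseteq> S \<Longrightarrow> lsum x n c = (\<Sum>\<alpha>\<in>S. c \<alpha> * mon \<alpha>)"
  unfolding lsum_def supp_def by (rule sum.mono_neutral_left) auto
lemma rsum_sup: "finite S \<Longrightarrow> supp c \<subseteq> S \<Longrightarrow> rsum x n c = (\<Sum>\<alpha>\<in>S. mon \<alpha> * c \<alpha>)"
  unfolding rsum_def supp_def by (rule sum.mono_neutral_left) auto

lemma CF_add: "c \<in> CF \<Longrightarrow> c' \<in> CF \<Longrightarrow> (\<lambda>\<alpha>. c \<alpha> + c' \<alpha>) \<in> CF"
proof -
  assume a: "c \<in> CF" "c' \<in> CF"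
  have "{\<alpha>. c \<alpha> + c' \<alpha> \<noteq> 0} \<subseteq> supp c \<union> supp c'" unfolding supp_def by auto
  then show ?thesis using a CF_fin[OF a(1)] CF_fin[OF a(2)] finite_subset
    unfolding coeff_fams_def by (auto intro: add_D)
qed

lemma CF_diff: "c \<in> CF \<Longrightarrow> c' \<in> CF \<Longrightarrow> (\<lambda>\<alpha>. c \<alpha> - c' \<alpha>) \<in> CF"
proof -
  assume a: "c \<in> CF" "c' \<in> CF"
  have "{\<alpha>. c \<alpha> - c' \<alpha> \<noteq> 0} \<subseteq> supp c \<union> supp c'" unfolding supp_def by auto
  then show ?thesis using a CF_fin[OF a(1)] CF_fin[OF a(2)] finite_subset
    unfolding coeff_fams_def by (auto intro: diff_D)
qed

lemma CF_single: "d \<in> D \<Longrightarrow> \<gamma> \<in> E \<Longrightarrow> (\<lambda>\<alpha>. if \<alpha> = \<gamma> then d else 0) \<in> CF"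
proof -
  assume a: "d \<in> D" "\<gamma> \<in> E"
  have "{\<alpha>. (if \<alpha> = \<gamma> then d else 0) \<noteq> 0} \<subseteq> {\<gamma>}" by auto
  then show ?thesis using a finite_subset unfolding coeff_fams_def by (auto intro: zero_D)
qed

lemma CF_smult: "c \<in> CF \<Longrightarrow> d \<in> D \<Longrightarrow> (\<lambda>\<alpha>. d * c \<alpha>) \<in> CF"
proof -
  assume a: "c \<in> CF" "d \<in> D"
  have "{\<alpha>. d * c \<alpha> \<noteq> 0} \<subseteq> supp c" unfolding supp_def by auto
  then show ?thesis using a CF_fin[OF a(1)] finite_subset
    unfolding coeff_fams_def by (auto intro: mult_D)
qed

lemma lsum_add: "c \<in> CF \<Longrightarrow> c' \<in> CF \<Longrightarrow> lsum x n (\<lambda>\<alpha>. c \<alpha> + c' \<alpha>) = lsum x n c + lsum x n c'"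
proof -
  assume a: "c \<in> CF" "c' \<in> CF"
  let ?S = "supp c \<union> supp c'"
  have f: "finite ?S" using CF_fin a by auto
  have "lsum x n (\<lambda>\<alpha>. c \<alpha> + c' \<alpha>) = (\<Sum>\<alpha>\<in>?S. (c \<alpha> + c' \<alpha>) * mon \<alpha>)"
    by (rule lsum_sup[OF f]) (auto simp: supp_def)
  also have "\<dots> = (\<Sum>\<alpha>\<in>?S. c \<alpha> * mon \<alpha>) + (\<Sum>\<alpha>\<in>?S. c' \<alpha> * mon \<alpha>)"
    by (simp add: distrib_right sum.distrib)
  also have "\<dots> = lsum x n c + lsum x n c'"
    using lsum_sup[OF f, of c] lsum_sup[OF f, of c'] by auto
  finally show ?thesis .
qed

lemma lsum_diff: "c \<in> CF \<Longrightarrow> c' \<in> CF \<Longrightarrow> lsum x n (\<lambda>\<alpha>. c \<alpha> - c' \<alpha>) = lsum x n c - lsum x n c'"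
proof -
  assume a: "c \<in> CF" "c' \<in> CF"
  let ?S = "supp c \<union> supp c'"
  have f: "finite ?S" using CF_fin a by auto
  have "lsum x n (\<lambda>\<alpha>. c \<alpha> - c' \<alpha>) = (\<Sum>\<alpha>\<in>?S. (c \<alpha> - c' \<alpha>) * mon \<alpha>)"
    by (rule lsum_sup[OF f]) (auto simp: supp_def)
  also have "\<dots> = (\<Sum>\<alpha>\<in>?S. c \<alpha> * mon \<alpha>) - (\<Sum>\<alpha>\<in>?S. c' \<alpha> * mon \<alpha>)"
    by (simp add: left_diff_distrib sum_subtractf)
  also have "\<dots> = lsum x n c - lsum x n c'"
    using lsum_sup[OF f, of c] lsum_sup[OF f, of c'] by auto
  finally show ?thesis .
qed

lemma rsum_diff: "c \<in> CF \<Longrightarrow> c' \<in> CF \<Longrightarrow> rsum x n (\<lambda>\<alpha>. c \<alpha> - c' \<alpha>) = rsum x n c - rsum x n c'"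
proof -
  assume a: "c \<in> CF" "c' \<in> CF"
  let ?S = "supp c \<union> supp c'"
  have f: "finite ?S" using CF_fin a by auto
  have "rsum x n (\<lambda>\<alpha>. c \<alpha> - c' \<alpha>) = (\<Sum>\<alpha>\<in>?S. mon \<alpha> * (c \<alpha> - c' \<alpha>))"
    by (rule rsum_sup[OF f]) (auto simp: supp_def)
  also have "\<dots> = (\<Sum>\<alpha>\<in>?S. mon \<alpha> * c \<alpha>) - (\<Sum>\<alpha>\<in>?S. mon \<alpha> * c' \<alpha>)"
    by (simp add: right_diff_distrib sum_subtractf)
  also have "\<dots> = rsum x n c - rsum x n c'"
    using rsum_sup[OF f, of c] rsum_sup[OF f, of c'] by auto
  finally show ?thesis .
qed

lemma rsum_add: "c \<in> CF \<Longrightarrow> c' \<in> CF \<Longrightarrow> rsum x n (\<lambda>\<alpha>. c \<alpha> + c' \<alpha>) = rsum x n c + rsum x n c'"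
proof -
  assume a: "c \<in> CF" "c' \<in> CF"
  let ?S = "supp c \<union> supp c'"
  have f: "finite ?S" using CF_fin a by auto
  have "rsum x n (\<lambda>\<alpha>. c \<alpha> + c' \<alpha>) = (\<Sum>\<alpha>\<in>?S. mon \<alpha> * (c \<alpha> + c' \<alpha>))"
    by (rule rsum_sup[OF f]) (auto simp: supp_def)
  also have "\<dots> = (\<Sum>\<alpha>\<in>?S. mon \<alpha> * c \<alpha>) + (\<Sum>\<alpha>\<in>?S. mon \<alpha> * c' \<alpha>)"
    by (simp add: distrib_left sum.distrib)
  also have "\<dots> = rsum x n c + rsum x n c'"
    using rsum_sup[OF f, of c] rsum_sup[OF f, of c'] by auto
  finally show ?thesis .
qed

lemma lsum_smult: "c \<in> CF \<Longrightarrow> lsum x n (\<lambda>\<alpha>. d * c \<alpha>) = d * lsum x n c"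
proof -
  assume a: "c \<in> CF"
  have f: "finite (supp c)" using CF_fin a by auto
  have "lsum x n (\<lambda>\<alpha>. d * c \<alpha>) = (\<Sum>\<alpha>\<in>supp c. (d * c \<alpha>) * mon \<alpha>)"
    by (rule lsum_sup[OF f]) (auto simp: supp_def)
  also have "\<dots> = d * lsum x n c"
    using lsum_sup[OF f, of c] by (simp add: sum_distrib_left mult.assoc)
  finally show ?thesis .
qed

lemma lsum_single: "lsum x n (\<lambda>\<alpha>. if \<alpha> = \<gamma> then d else 0) = d * mon \<gamma>"
  by (subst lsum_sup[of "{\<gamma>}"]) (auto simp: supp_def)
lemma rsum_single: "rsum x n (\<lambda>\<alpha>. if \<alpha> = \<gamma> then d else 0) = mon \<gamma> * d"
  by (subst rsum_sup[of "{\<gamma>}"]) (auto simp: supp_def)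

lemma zero_CF: "(\<lambda>_. 0) \<in> CF" using CF_single[OF zero_D vzero_E] by simp
lemma lsum_zero: "lsum x n (\<lambda>_. 0) = 0" using lsum_single[of vzero 0] by simp
lemma rsum_zero: "rsum x n (\<lambda>_. 0) = 0" using rsum_single[of vzero 0] by simp

lemma lc_prop: "lc f \<in> CF \<and> f = lsum x n (lc f)"
proof -
  have "\<exists>!c. c \<in> CF \<and> f = lsum x n c" using lp unfolding left_polynomial_def by blast
  then show ?thesis unfolding lcoeff_def by (rule theI')
qed
lemma lc_CF: "lc f \<in> CF" and lc_sum: "lsum x n (lc f) = f" using lc_prop by auto

lemma lc_eq: "c \<in> CF \<Longrightarrow> f = lsum x n c \<Longrightarrow> lc f = c"
proof -
  assume a: "c \<in> CF" "f = lsum x n c"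
  have u: "\<exists>!c. c \<in> CF \<and> f = lsum x n c" using lp unfolding left_polynomial_def by blast
  show ?thesis unfolding lcoeff_def by (rule the1_equality[OF u]) (use a in simp)
qed

lemma lc_D: "lc f \<alpha> \<in> D" using CF_D[OF lc_CF] .
lemma lc_E: "lc f \<alpha> \<noteq> 0 \<Longrightarrow> \<alpha> \<in> E" using CF_E[OF lc_CF] .
lemma lc_fin: "finite {\<alpha>. lc f \<alpha> \<noteq> 0}" using CF_fin[OF lc_CF] unfolding supp_def .

lemma lc_add: "lc (f + g) = (\<lambda>\<alpha>. lc f \<alpha> + lc g \<alpha>)"
  by (rule lc_eq) (auto simp: lsum_add lc_CF lc_sum CF_add)
lemma lc_diff: "lc (f - g) = (\<lambda>\<alpha>. lc f \<alpha> - lc g \<alpha>)"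
  by (rule lc_eq) (auto simp: lsum_diff lc_CF lc_sum CF_diff)
lemma lc_smult: "d \<in> D \<Longrightarrow> lc (d * f) = (\<lambda>\<alpha>. d * lc f \<alpha>)"
  by (rule lc_eq) (auto simp: lsum_smult lc_CF lc_sum CF_smult)
lemma lc_single: "d \<in> D \<Longrightarrow> \<gamma> \<in> E \<Longrightarrow> lc (d * mon \<gamma>) = (\<lambda>\<alpha>. if \<alpha> = \<gamma> then d else 0)"
  by (rule lc_eq) (auto simp: lsum_single CF_single)
lemma lc_zero: "lc 0 = (\<lambda>_. 0)"
  by (rule lc_eq) (auto simp: lsum_zero zero_CF)
lemma lc_mon: "\<gamma> \<in> E \<Longrightarrow> lc (mon \<gamma>) = (\<lambda>\<alpha>. if \<alpha> = \<gamma> then 1 else 0)"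
  using lc_single[OF one_D] by simp
lemma lc_const: "d \<in> D \<Longrightarrow> lc d = (\<lambda>\<alpha>. if \<alpha> = vzero then d else 0)"
  using lc_single[OF _ vzero_E] by (simp add: mon_zero)

lemma lc_nonzero: "f \<noteq> 0 \<Longrightarrow> \<exists>\<alpha>. lc f \<alpha> \<noteq> 0"
proof (rule ccontr)
  assume f: "f \<noteq> 0" and "\<not> (\<exists>\<alpha>. lc f \<alpha> \<noteq> 0)"
  then have "lc f = (\<lambda>_. 0)" by auto
  then show False using lc_sum[of f] lsum_zero f by simp
qed


lemma ex_max: "finite S \<Longrightarrow> S \<noteq> {} \<Longrightarrow> S \<subseteq> E \<Longrightarrow> \<exists>\<mu>\<in>S. \<forall>\<beta>\<in>S. le \<beta> \<mu>"
proof (induction S rule: finite_ne_induct)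
  case (singleton a) then show ?case using le_refl by auto
next
  case (insert a S)
  then obtain \<mu> where mu: "\<mu> \<in> S" "\<forall>\<beta>\<in>S. le \<beta> \<mu>" by auto
  have aE: "a \<in> E" and muE: "\<mu> \<in> E" and SE: "S \<subseteq> E" using insert mu by auto
  show ?case
  proof (cases "le \<mu> a")
    case True
    have "\<forall>\<beta>\<in>insert a S. le \<beta> a"
      using True mu le_trans[OF _ muE aE] SE le_refl[OF aE] by blast
    then show ?thesis by blast
  next
    case False
    then have "le a \<mu>" using le_total[OF aE muE] by auto
    then show ?thesis using mu by blast
  qed
qed

lemma lx_prop: "f \<noteq> 0 \<Longrightarrow> lc f (lx f) \<noteq> 0 \<and> (\<forall>\<beta>. lc f \<beta> \<noteq> 0 \<longrightarrow> le \<beta> (lx f))"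
proof -
  assume f: "f \<noteq> 0"
  let ?N = "{\<alpha>. lc f \<alpha> \<noteq> 0}"
  have "?N \<noteq> {}" using lc_nonzero[OF f] by auto
  moreover have "?N \<subseteq> E" using lc_E by auto
  ultimately obtain \<mu> where mu: "\<mu> \<in> ?N" "\<forall>\<beta>\<in>?N. le \<beta> \<mu>" using ex_max[OF lc_fin] by blast
  have "lx f = \<mu>" unfolding lexp_def newton_def
  proof (rule the_equality)
    show "\<mu> \<in> ?N \<and> (\<forall>\<beta>\<in>?N. le \<beta> \<mu>)" using mu by blast
  next
    fix \<nu> assume "\<nu> \<in> ?N \<and> (\<forall>\<beta>\<in>?N. le \<beta> \<nu>)"
    then show "\<nu> = \<mu>" using mu le_antisym lc_E by blast
  qed
  then show ?thesis using mu by auto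
qed

lemma lx_E: "f \<noteq> 0 \<Longrightarrow> lx f \<in> E" using lx_prop lc_E by blast

lemma lx_unique: "lc f \<gamma> \<noteq> 0 \<Longrightarrow> \<forall>\<beta>. lc f \<beta> \<noteq> 0 \<longrightarrow> le \<beta> \<gamma> \<Longrightarrow> lx f = \<gamma>"
proof -
  assume a: "lc f \<gamma> \<noteq> 0" "\<forall>\<beta>. lc f \<beta> \<noteq> 0 \<longrightarrow> le \<beta> \<gamma>"
  then have f: "f \<noteq> 0" using lc_zero by auto
  show ?thesis using lx_prop[OF f] a le_antisym lc_E by blast
qed

lemma mon_ne: "\<gamma> \<in> E \<Longrightarrow> mon \<gamma> \<noteq> 0"
  using lc_mon[of \<gamma>] lc_zero nontriv by (metis (full_types))

lemma lx_mon: "\<gamma> \<in> E \<Longrightarrow> lx (mon \<gamma>) = \<gamma>"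
  by (rule lx_unique) (auto simp: lc_mon nontriv le_refl)

lemma lx_const: "d \<in> D \<Longrightarrow> d \<noteq> 0 \<Longrightarrow> lx d = vzero"
  by (rule lx_unique) (auto simp: lc_const le_refl vzero_E)

definition below :: "'a \<Rightarrow> (nat \<Rightarrow> nat) \<Rightarrow> bool" where
  "below f \<gamma> \<longleftrightarrow> (\<forall>\<beta>. lc f \<beta> \<noteq> 0 \<longrightarrow> le \<beta> \<gamma> \<and> \<beta> \<noteq> \<gamma>)"

lemma below_zero: "below 0 \<gamma>" by (simp add: below_def lc_zero)
lemma below_add: "below f \<gamma> \<Longrightarrow> below g \<gamma> \<Longrightarrow> below (f + g) \<gamma>"
  unfolding below_def lc_add by (metis add.right_neutral add_0)
lemma below_diff: "below f \<gamma> \<Longrightarrow> below g \<gamma> \<Longrightarrow> below (f - g) \<gamma>"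
  unfolding below_def lc_diff by (metis diff_zero diff_self)
lemma below_smult: "d \<in> D \<Longrightarrow> below f \<gamma> \<Longrightarrow> below (d * f) \<gamma>"
proof -
  assume "d \<in> D" "below f \<gamma>"
  then show ?thesis unfolding below_def lc_smult[OF \<open>d \<in> D\<close>] by (metis mult_zero_right)
qed
lemma below_coeff: "below f \<gamma> \<Longrightarrow> lc f \<gamma> = 0"
  unfolding below_def by blast
lemma below_sum: "finite S \<Longrightarrow> (\<And>s. s \<in> S \<Longrightarrow> below (g s) \<gamma>) \<Longrightarrow> below (\<Sum>s\<in>S. g s) \<gamma>"
  by (induction S rule: finite_induct) (auto simp: below_zero below_add)

lemma below_iff: "f \<noteq> 0 \<Longrightarrow> \<gamma> \<in> E \<Longrightarrow> below f \<gamma> \<longleftrightarrow> le (lx f) \<gamma> \<and> lx f \<noteq> \<gamma>"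
proof
  assume f: "f \<noteq> 0" and g: "\<gamma> \<in> E" and "below f \<gamma>"
  then show "le (lx f) \<gamma> \<and> lx f \<noteq> \<gamma>" using lx_prop[OF f] unfolding below_def by blast
next
  assume f: "f \<noteq> 0" and g: "\<gamma> \<in> E" and h: "le (lx f) \<gamma> \<and> lx f \<noteq> \<gamma>"
  show "below f \<gamma>" unfolding below_def
  proof (intro allI impI)
    fix \<beta> assume b: "lc f \<beta> \<noteq> 0"
    have bE: "\<beta> \<in> E" using lc_E b by blast
    have l: "le \<beta> (lx f)" using lx_prop[OF f] b by blast
    have "le \<beta> \<gamma>" using le_trans[OF bE lx_E[OF f] g l] h by blast
    moreover have "\<beta> \<noteq> \<gamma>"
    proof
      assume "\<beta> = \<gamma>"
      then show False using le_antisym[OF lx_E[OF f] g] l h by blast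
    qed
    ultimately show "le \<beta> \<gamma> \<and> \<beta> \<noteq> \<gamma>" by blast
  qed
qed

lemma lt_add_left: "\<alpha> \<in> E \<Longrightarrow> \<beta> \<in> E \<Longrightarrow> \<gamma> \<in> E \<Longrightarrow> le \<beta> \<gamma> \<Longrightarrow> \<beta> \<noteq> \<gamma> \<Longrightarrow>
   le (vadd \<alpha> \<beta>) (vadd \<alpha> \<gamma>) \<and> vadd \<alpha> \<beta> \<noteq> vadd \<alpha> \<gamma>"
  using le_add[of \<beta> \<gamma> \<alpha>] vadd_comm[of \<alpha>] vadd_cancel[of \<beta> \<alpha> \<gamma>] by auto

lemma lt_add_right: "\<alpha> \<in> E \<Longrightarrow> \<beta> \<in> E \<Longrightarrow> \<gamma> \<in> E \<Longrightarrow> le \<beta> \<gamma> \<Longrightarrow> \<beta> \<noteq> \<gamma> \<Longrightarrow>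
   le (vadd \<beta> \<alpha>) (vadd \<gamma> \<alpha>) \<and> vadd \<beta> \<alpha> \<noteq> vadd \<gamma> \<alpha>"
  using le_add[of \<beta> \<gamma> \<alpha>] vadd_cancel[of \<beta> \<alpha> \<gamma>] by auto

lemma below_lmult: "u \<noteq> 0 \<Longrightarrow> \<gamma> \<in> E \<Longrightarrow> below r \<gamma> \<Longrightarrow> below (u * r) (vadd (lx u) \<gamma>)"
proof (cases "r = 0")
  case True then show ?thesis by (simp add: below_zero)
next
  case False
  assume u: "u \<noteq> 0" and g: "\<gamma> \<in> E" and b: "below r \<gamma>"
  have m: "u * r \<noteq> 0" "lx (u * r) = vadd (lx u) (lx r)" using multax[OF u False] by auto
  have "le (lx r) \<gamma> \<and> lx r \<noteq> \<gamma>" using below_iff[OF False g] b by blast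
  then have "le (lx (u*r)) (vadd (lx u) \<gamma>) \<and> lx (u*r) \<noteq> vadd (lx u) \<gamma>"
    using lt_add_left[OF lx_E[OF u] lx_E[OF False] g] m by auto
  then show ?thesis using below_iff[OF m(1) vadd_E[OF lx_E[OF u] g]] by blast
qed

lemma below_rmult: "v \<noteq> 0 \<Longrightarrow> \<gamma> \<in> E \<Longrightarrow> below r \<gamma> \<Longrightarrow> below (r * v) (vadd \<gamma> (lx v))"
proof (cases "r = 0")
  case True then show ?thesis by (simp add: below_zero)
next
  case False
  assume u: "v \<noteq> 0" and g: "\<gamma> \<in> E" and b: "below r \<gamma>"
  have m: "r * v \<noteq> 0" "lx (r * v) = vadd (lx r) (lx v)" using multax[OF False u] by auto
  have "le (lx r) \<gamma> \<and> lx r \<noteq> \<gamma>" using below_iff[OF False g] b by blast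
  then have "le (lx (r*v)) (vadd \<gamma> (lx v)) \<and> lx (r*v) \<noteq> vadd \<gamma> (lx v)"
    using lt_add_right[OF lx_E[OF u] lx_E[OF False] g] m by auto
  then show ?thesis using below_iff[OF m(1) vadd_E[OF g lx_E[OF u]]] by blast
qed

lemma below_rconst: "b \<in> D \<Longrightarrow> \<gamma> \<in> E \<Longrightarrow> below r \<gamma> \<Longrightarrow> below (r * b) \<gamma>"
proof (cases "b = 0")
  case True then show ?thesis by (simp add: below_zero)
next
  case False
  assume "b \<in> D" "\<gamma> \<in> E" "below r \<gamma>"
  then show ?thesis using below_rmult[OF False, of \<gamma> r] lx_const[OF _ False] vadd_zero by simp
qed

lemma lead_coeff: "d \<in> D \<Longrightarrow> \<gamma> \<in> E \<Longrightarrow> below (f - d * mon \<gamma>) \<gamma> \<Longrightarrow> lc f \<gamma> = d"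
  using below_coeff[of "f - d * mon \<gamma>" \<gamma>] by (simp add: lc_diff lc_single)


abbreviation "tw i \<equiv> twist D x n i"

lemma tw_def': "tw i a = lc (x i * a) (unitvec i)" by (simp add: twist_def)

lemma tw_D: "tw i a \<in> D" by (simp add: tw_def' lc_D)

lemma tw_add: "tw i (a + b) = tw i a + tw i b"
  by (simp add: tw_def' distrib_left lc_add)

lemma tw_zero: "tw i 0 = 0" by (simp add: tw_def' lc_zero)

lemma M1: "i < n \<Longrightarrow> a \<in> D \<Longrightarrow> below (x i * a - tw i a * x i) (unitvec i)"
proof (cases "a = 0")
  case True then show ?thesis by (simp add: tw_zero below_zero)
next
  case False
  assume i: "i < n" and a: "a \<in> D"
  let ?e = "unitvec i"
  have eE: "?e \<in> E" using unitvec_E[OF i] .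
  have xne: "x i \<noteq> 0" using mon_ne[OF eE] mon_unit[OF i] by simp
  have m: "x i * a \<noteq> 0" "lx (x i * a) = vadd (lx (x i)) (lx a)" using multax[OF xne False] by auto
  have lxa: "lx (x i * a) = ?e"
    using m(2) lx_const[OF a False] vadd_zero lx_mon[OF eE] mon_unit[OF i] by simp
  show ?thesis unfolding below_def
  proof (intro allI impI)
    fix \<beta> assume b: "lc (x i * a - tw i a * x i) \<beta> \<noteq> 0"
    have "lc (x i * a - tw i a * x i) = lc (x i * a - tw i a * mon ?e)" using mon_unit[OF i] by simp
    also have "\<dots> = (\<lambda>\<alpha>. lc (x i * a) \<alpha> - (if \<alpha> = ?e then tw i a else 0))"
      by (simp add: lc_diff lc_single[OF tw_D eE])
    finally have eq: "lc (x i * a - tw i a * x i) = \<dots>" .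
    have "\<beta> \<noteq> ?e" using b unfolding eq by (auto simp: tw_def')
    moreover have "lc (x i * a) \<beta> \<noteq> 0" using b \<open>\<beta> \<noteq> ?e\<close> unfolding eq by simp
    then have "le \<beta> ?e" using lx_prop[OF m(1)] lxa by auto
    ultimately show "le \<beta> ?e \<and> \<beta> \<noteq> ?e" by blast
  qed
qed

lemma tw_mult: "i < n \<Longrightarrow> a \<in> D \<Longrightarrow> b \<in> D \<Longrightarrow> tw i (a * b) = tw i a * tw i b"
proof -
  assume i: "i < n" and a: "a \<in> D" and b: "b \<in> D"
  let ?e = "unitvec i"
  have eE: "?e \<in> E" using unitvec_E[OF i] .
  have eq: "x i * (a * b) - (tw i a * tw i b) * mon ?e =
     tw i a * (x i * b - tw i b * x i) + (x i * a - tw i a * x i) * b"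
    using mon_unit[OF i] by (simp add: algebra_simps)
  have "below (x i * (a * b) - (tw i a * tw i b) * mon ?e) ?e"
    unfolding eq
    by (intro below_add below_smult below_rconst M1 i a b tw_D eE)
  then have "lc (x i * (a * b)) ?e = tw i a * tw i b"
    by (rule lead_coeff[OF mult_D[OF tw_D tw_D] eE])
  then show ?thesis by (simp add: tw_def')
qed

lemma tw_one: "i < n \<Longrightarrow> tw i 1 = 1"
proof -
  assume i: "i < n"
  have "below (x i * 1 - 1 * mon (unitvec i)) (unitvec i)"
    using mon_unit[OF i] by (simp add: below_zero)
  then show ?thesis using lead_coeff[OF one_D unitvec_E[OF i]] by (simp add: tw_def')
qed

lemma tw_diff: "tw i (a - b) = tw i a - tw i b"
  using tw_add[of i "a - b" b] by (simp add: algebra_simps)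

lemma tw_inj: "i < n \<Longrightarrow> inj_on (tw i) D"
proof (rule inj_onI)
  fix a b assume i: "i < n" and a: "a \<in> D" and b: "b \<in> D" and eq: "tw i a = tw i b"
  show "a = b"
  proof (rule ccontr)
    assume "a \<noteq> b"
    then have ne: "a - b \<noteq> 0" by simp
    let ?e = "unitvec i"
    have eE: "?e \<in> E" using unitvec_E[OF i] .
    have xne: "x i \<noteq> 0" using mon_ne[OF eE] mon_unit[OF i] by simp
    have m: "x i * (a - b) \<noteq> 0" "lx (x i * (a - b)) = vadd (lx (x i)) (lx (a - b))"
      using multax[OF xne ne] by auto
    have lxa: "lx (x i * (a - b)) = ?e"
      using m(2) lx_const[OF diff_D[OF a b] ne] vadd_zero lx_mon[OF eE] mon_unit[OF i] by simp
    have "tw i (a - b) \<noteq> 0" using lx_prop[OF m(1)] lxa by (simp add: tw_def')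
    then show False using eq tw_diff[of i a b] by simp
  qed
qed


lemma lx_monc: "\<gamma> \<in> E \<Longrightarrow> c \<in> D \<Longrightarrow> c \<noteq> 0 \<Longrightarrow> mon \<gamma> * c \<noteq> 0 \<and> lx (mon \<gamma> * c) = \<gamma>"
  using multax[OF mon_ne, of \<gamma> c] lx_mon[of \<gamma>] lx_const[of c] vadd_zero by auto

lemma rsum_lead:
  assumes h: "h \<in> CF" and ne: "supp h \<noteq> {}"
  shows "\<exists>\<mu>. h \<mu> \<noteq> 0 \<and> \<mu> \<in> E \<and> lc (rsum x n h) \<mu> = lc (mon \<mu> * h \<mu>) \<mu> \<and> lc (rsum x n h) \<mu> \<noteq> 0"
proof -
  have fin: "finite (supp h)" using CF_fin[OF h] .
  have sE: "supp h \<subseteq> E" using CF_E[OF h] unfolding supp_def by blast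
  obtain \<mu> where mu: "\<mu> \<in> supp h" "\<forall>\<beta>\<in>supp h. le \<beta> \<mu>" using ex_max[OF fin ne sE] by blast
  have muE: "\<mu> \<in> E" and hmu: "h \<mu> \<noteq> 0" using mu sE unfolding supp_def by auto
  have "rsum x n h = (\<Sum>\<alpha>\<in>supp h. mon \<alpha> * h \<alpha>)" by (rule rsum_sup[OF fin]) simp
  also have "\<dots> = mon \<mu> * h \<mu> + (\<Sum>\<alpha>\<in>supp h - {\<mu>}. mon \<alpha> * h \<alpha>)"
    by (rule sum.remove[OF fin mu(1)])
  finally have eq: "rsum x n h = mon \<mu> * h \<mu> + (\<Sum>\<alpha>\<in>supp h - {\<mu>}. mon \<alpha> * h \<alpha>)" .
  have "below (\<Sum>\<alpha>\<in>supp h - {\<mu>}. mon \<alpha> * h \<alpha>) \<mu>"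
  proof (rule below_sum)
    show "finite (supp h - {\<mu>})" using fin by simp
  next
    fix \<beta> assume b: "\<beta> \<in> supp h - {\<mu>}"
    have bE: "\<beta> \<in> E" and hb: "h \<beta> \<noteq> 0" using b sE unfolding supp_def by auto
    have l: "mon \<beta> * h \<beta> \<noteq> 0 \<and> lx (mon \<beta> * h \<beta>) = \<beta>" using lx_monc[OF bE CF_D[OF h] hb] .
    show "below (mon \<beta> * h \<beta>) \<mu>" using below_iff[OF conjunct1[OF l] muE] l mu b by auto
  qed
  then have c0: "lc (\<Sum>\<alpha>\<in>supp h - {\<mu>}. mon \<alpha> * h \<alpha>) \<mu> = 0" by (rule below_coeff)
  have l: "mon \<mu> * h \<mu> \<noteq> 0 \<and> lx (mon \<mu> * h \<mu>) = \<mu>" using lx_monc[OF muE CF_D[OF h] hmu] .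
  have nz: "lc (mon \<mu> * h \<mu>) \<mu> \<noteq> 0" using lx_prop[OF conjunct1[OF l]] l by simp
  have "lc (rsum x n h) \<mu> = lc (mon \<mu> * h \<mu>) \<mu>" unfolding eq lc_add using c0 by simp
  then show ?thesis using nz hmu muE by auto
qed

lemma rsum_inj: "c \<in> CF \<Longrightarrow> c' \<in> CF \<Longrightarrow> rsum x n c = rsum x n c' \<Longrightarrow> c = c'"
proof (rule ccontr)
  assume c: "c \<in> CF" "c' \<in> CF" and eq: "rsum x n c = rsum x n c'" and ne: "c \<noteq> c'"
  let ?h = "\<lambda>\<alpha>. c \<alpha> - c' \<alpha>"
  have h: "?h \<in> CF" using CF_diff[OF c] .
  have "supp ?h \<noteq> {}" using ne unfolding supp_def by (auto simp: fun_eq_iff)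
  then obtain \<mu> where "lc (rsum x n ?h) \<mu> \<noteq> 0" using rsum_lead[OF h] by blast
  moreover have "rsum x n ?h = 0" using rsum_diff[OF c] eq by simp
  ultimately show False by (simp add: lc_zero)
qed

lemma right_surj: "right_polynomial D x n \<Longrightarrow> i < n \<Longrightarrow> d \<in> D \<Longrightarrow> \<exists>a\<in>D. tw i a = d"
proof (cases "d = 0")
  case True then show ?thesis using zero_D tw_zero by blast
next
  case False
  assume rp: "right_polynomial D x n" and i: "i < n" and d: "d \<in> D"
  let ?e = "unitvec i"
  have eE: "?e \<in> E" using unitvec_E[OF i] .
  let ?f = "d * mon ?e"
  obtain h where h: "h \<in> CF" "?f = rsum x n h" using rp unfolding right_polynomial_def by blast
  have lcf: "lc ?f = (\<lambda>\<alpha>. if \<alpha> = ?e then d else 0)" using lc_single[OF d eE] .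
  have "supp h \<noteq> {}"
  proof
    assume "supp h = {}"
    then have "h = (\<lambda>_. 0)" unfolding supp_def by auto
    then have "?f = 0" using h(2) rsum_zero by simp
    then show False using lcf lc_zero False by (metis (mono_tags))
  qed
  then obtain \<mu> where mu: "h \<mu> \<noteq> 0" "\<mu> \<in> E" "lc (rsum x n h) \<mu> = lc (mon \<mu> * h \<mu>) \<mu>"
     "lc (rsum x n h) \<mu> \<noteq> 0" using rsum_lead[OF h(1)] by blast
  have "\<mu> = ?e" using mu(4) h(2)[symmetric] lcf by (metis (mono_tags))
  then have "d = lc (x i * h ?e) ?e" using mu(3) h(2) lcf mon_unit[OF i] by (metis (mono_tags))
  then show ?thesis using CF_D[OF h(1)] by (auto simp: tw_def')
qed


lemma chain_lt:
  assumes ch: "\<forall>k. (f (Suc k), f k) \<in> {(\<beta>, \<alpha>). \<beta> \<in> E \<and> \<alpha> \<in> E \<and> le \<beta> \<alpha> \<and> \<beta> \<noteq> \<alpha>}"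
  shows "k < l \<Longrightarrow> le (f l) (f k) \<and> f l \<noteq> f k"
proof (induction l)
  case 0 then show ?case by simp
next
  case (Suc l)
  have E1: "f (Suc l) \<in> E" "f l \<in> E" "f k \<in> E" using ch by auto
  have s1: "le (f (Suc l)) (f l)" "f (Suc l) \<noteq> f l" using ch by auto
  show ?case
  proof (cases "k = l")
    case True then show ?thesis using s1 by simp
  next
    case False
    then have IH: "le (f l) (f k) \<and> f l \<noteq> f k" using Suc by simp
    have le1: "le (f (Suc l)) (f k)" using le_trans[OF E1] s1 IH by blast
    moreover have "f (Suc l) \<noteq> f k"
    proof
      assume "f (Suc l) = f k"
      then have "le (f k) (f l)" using s1 by simp
      then show False using le_antisym[OF E1(2,3)] IH by blast
    qed
    ultimately show ?thesis by blast
  qed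
qed

lemma wf_lt: "wf {(\<beta>, \<alpha>). \<beta> \<in> E \<and> \<alpha> \<in> E \<and> le \<beta> \<alpha> \<and> \<beta> \<noteq> \<alpha>}"
proof (rule ccontr)
  assume "\<not> ?thesis"
  then obtain f :: "nat \<Rightarrow> nat \<Rightarrow> nat" where
    ch: "\<forall>k. (f (Suc k), f k) \<in> {(\<beta>, \<alpha>). \<beta> \<in> E \<and> \<alpha> \<in> E \<and> le \<beta> \<alpha> \<and> \<beta> \<noteq> \<alpha>}"
    unfolding wf_iff_no_infinite_down_chain by blast
  obtain k l :: nat where kl: "k < l" "\<forall>i<n. f k i \<le> f l i" using dickson[of n f] by blast
  have fE: "f j \<in> E" for j using ch by (cases j) auto
  have lt: "le (f l) (f k)" "f l \<noteq> f k" using chain_lt[OF ch kl(1)] by auto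
  define \<delta> where "\<delta> = (\<lambda>i. f l i - f k i)"
  have dE: "\<delta> \<in> E" using fE[of l] unfolding \<delta>_def expvecs_def by auto
  have "vadd \<delta> (f k) = f l"
  proof (rule ext)
    fix i show "vadd \<delta> (f k) i = f l i"
    proof (cases "i < n")
      case True then show ?thesis using kl(2) unfolding vadd_def \<delta>_def by simp
    next
      case False then show ?thesis using fE[of k] fE[of l] unfolding vadd_def \<delta>_def expvecs_def by simp
    qed
  qed
  moreover have "vadd vzero (f k) = f k" by (simp add: vadd_def vzero_def)
  ultimately have "le (f k) (f l)" using le_add[OF vzero_E dE fE[of k] le_zero[OF dE]] by simp
  then show False using le_antisym[OF fE[of k] fE[of l]] lt by metis
qed

definition Good :: "'a \<Rightarrow> bool" where
  "Good u \<longleftrightarrow> u \<noteq> 0 \<and> (\<forall>d\<in>D. \<exists>c\<in>D. below (u * c - d * u) (lx u))"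

lemma Good_mult: "Good u \<Longrightarrow> Good v \<Longrightarrow> Good (u * v)"
proof -
  assume gu: "Good u" and gv: "Good v"
  have u: "u \<noteq> 0" and v: "v \<noteq> 0" using gu gv by (auto simp: Good_def)
  have m: "u * v \<noteq> 0" "lx (u * v) = vadd (lx u) (lx v)" using multax[OF u v] by auto
  have "\<exists>c\<in>D. below (u * v * c - d * (u * v)) (lx (u * v))" if d: "d \<in> D" for d
  proof -
    obtain k where k: "k \<in> D" "below (u * k - d * u) (lx u)" using gu d unfolding Good_def by blast
    obtain c where c: "c \<in> D" "below (v * c - k * v) (lx v)" using gv k(1) unfolding Good_def by blast
    have eq: "u * v * c - d * (u * v) = u * (v * c - k * v) + (u * k - d * u) * v"
      by (simp add: algebra_simps)
    have "below (u * (v * c - k * v) + (u * k - d * u) * v) (vadd (lx u) (lx v))"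
      by (intro below_add below_lmult below_rmult u v lx_E c(2) k(2))
    then have "below (u * v * c - d * (u * v)) (lx (u * v))" using eq m(2) by simp
    then show ?thesis using c(1) by blast
  qed
  then show ?thesis using m(1) unfolding Good_def by blast
qed

lemma Good_one: "Good 1"
proof -
  have "lx 1 = vzero" using lx_const[OF one_D nontriv] .
  then show ?thesis unfolding Good_def using nontriv below_zero
    by (metis diff_self mult_1_left mult_1_right)
qed

lemma Good_pow: "Good u \<Longrightarrow> Good (u ^ k)"
  by (induction k) (auto simp: Good_one Good_mult)

lemma Good_prod_list: "(\<And>u. u \<in> set us \<Longrightarrow> Good u) \<Longrightarrow> Good (prod_list us)"
  by (induction us) (auto simp: Good_one Good_mult)

lemma Good_x: "i < n \<Longrightarrow> (\<forall>d\<in>D. \<exists>a\<in>D. tw i a = d) \<Longrightarrow> Good (x i)"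
proof -
  assume i: "i < n" and s: "\<forall>d\<in>D. \<exists>a\<in>D. tw i a = d"
  let ?e = "unitvec i"
  have eE: "?e \<in> E" using unitvec_E[OF i] .
  have xne: "x i \<noteq> 0" using mon_ne[OF eE] mon_unit[OF i] by simp
  have lxx: "lx (x i) = ?e" using lx_mon[OF eE] mon_unit[OF i] by simp
  show ?thesis unfolding Good_def lxx using xne M1[OF i] s by metis
qed

lemma Good_mon:
  assumes s: "\<forall>i<n. \<forall>d\<in>D. \<exists>a\<in>D. tw i a = d" shows "Good (mon \<alpha>)"
  unfolding monom_def
proof (rule Good_prod_list)
  fix u assume "u \<in> set (map (\<lambda>i. x i ^ \<alpha> i) [0..<n])"
  then obtain j where j: "j < n" "u = x j ^ \<alpha> j" by auto
  then show "Good u" using Good_pow[OF Good_x[OF j(1)]] s by simp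
qed

definition RS :: "'a set" where "RS = {f. \<exists>c\<in>CF. f = rsum x n c}"

lemma RS_add: "f \<in> RS \<Longrightarrow> g \<in> RS \<Longrightarrow> f + g \<in> RS"
proof -
  assume "f \<in> RS" "g \<in> RS"
  then obtain c c' where c: "c \<in> CF" "f = rsum x n c" "c' \<in> CF" "g = rsum x n c'"
    unfolding RS_def by blast
  then have "f + g = rsum x n (\<lambda>\<alpha>. c \<alpha> + c' \<alpha>)" by (simp add: rsum_add)
  then show ?thesis unfolding RS_def using CF_add[OF c(1) c(3)] by blast
qed
lemma RS_diff: "f \<in> RS \<Longrightarrow> g \<in> RS \<Longrightarrow> f - g \<in> RS"
proof -
  assume "f \<in> RS" "g \<in> RS"
  then obtain c c' where c: "c \<in> CF" "f = rsum x n c" "c' \<in> CF" "g = rsum x n c'"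
    unfolding RS_def by blast
  then have "f - g = rsum x n (\<lambda>\<alpha>. c \<alpha> - c' \<alpha>)" by (simp add: rsum_diff)
  then show ?thesis unfolding RS_def using CF_diff[OF c(1) c(3)] by blast
qed
lemma RS_zero: "0 \<in> RS"
  unfolding RS_def using rsum_zero zero_CF by (metis (mono_tags, lifting) mem_Collect_eq)
lemma RS_sum: "finite S \<Longrightarrow> (\<And>s. s \<in> S \<Longrightarrow> g s \<in> RS) \<Longrightarrow> (\<Sum>s\<in>S. g s) \<in> RS"
  by (induction S rule: finite_induct) (auto simp: RS_zero RS_add)
lemma RS_single: "d \<in> D \<Longrightarrow> \<gamma> \<in> E \<Longrightarrow> mon \<gamma> * d \<in> RS"
proof -
  assume d: "d \<in> D" and g: "\<gamma> \<in> E"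
  have "mon \<gamma> * d = rsum x n (\<lambda>\<alpha>. if \<alpha> = \<gamma> then d else 0)" by (simp add: rsum_single)
  then show ?thesis unfolding RS_def using CF_single[OF d g] by blast
qed

lemma lsum_expand: "f = (\<Sum>\<alpha>\<in>{\<alpha>. lc f \<alpha> \<noteq> 0}. lc f \<alpha> * mon \<alpha>)"
  using lc_sum[of f] unfolding lsum_def by simp

lemma RS_all:
  assumes s: "\<forall>i<n. \<forall>d\<in>D. \<exists>a\<in>D. tw i a = d"
  shows "f \<in> RS"
proof -
  have key: "\<alpha> \<in> E \<longrightarrow> (\<forall>d\<in>D. d * mon \<alpha> \<in> RS)" for \<alpha>
  proof (induction \<alpha> rule: wf_induct[OF wf_lt])
    case (1 \<alpha>)
    show ?case
    proof (intro impI ballI)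
      fix d assume aE: "\<alpha> \<in> E" and d: "d \<in> D"
      have g: "Good (mon \<alpha>)" using Good_mon[OF s] .
      obtain c where c: "c \<in> D" "below (mon \<alpha> * c - d * mon \<alpha>) \<alpha>"
        using g d lx_mon[OF aE] unfolding Good_def by metis
      let ?g = "mon \<alpha> * c - d * mon \<alpha>"
      have "(\<Sum>\<beta>\<in>{\<beta>. lc ?g \<beta> \<noteq> 0}. lc ?g \<beta> * mon \<beta>) \<in> RS"
      proof (rule RS_sum[OF lc_fin])
        fix \<beta> assume b: "\<beta> \<in> {\<beta>. lc ?g \<beta> \<noteq> 0}"
        have "\<beta> \<in> E" "le \<beta> \<alpha>" "\<beta> \<noteq> \<alpha>" using b c(2) lc_E unfolding below_def by auto
        then show "lc ?g \<beta> * mon \<beta> \<in> RS" using 1 aE lc_D by blast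
      qed
      then have "?g \<in> RS" using lsum_expand[of ?g] by simp
      moreover have "mon \<alpha> * c \<in> RS" using RS_single[OF c(1) aE] .
      ultimately have "mon \<alpha> * c - ?g \<in> RS" by (rule RS_diff[rotated])
      then show "d * mon \<alpha> \<in> RS" by simp
    qed
  qed
  have "(\<Sum>\<alpha>\<in>{\<alpha>. lc f \<alpha> \<noteq> 0}. lc f \<alpha> * mon \<alpha>) \<in> RS"
    by (rule RS_sum[OF lc_fin]) (use key lc_E lc_D in blast)
  then show ?thesis using lsum_expand[of f] by simp
qed

lemma main_nontriv:
  "right_polynomial D x n \<longleftrightarrow> (\<forall>i<n. ring_automorphism_on D (tw i))"
proof
  assume rp: "right_polynomial D x n"
  show "\<forall>i<n. ring_automorphism_on D (tw i)"
  proof (intro allI impI)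
    fix i assume i: "i < n"
    have "tw i ` D = D"
    proof
      show "tw i ` D \<subseteq> D" using tw_D by blast
      show "D \<subseteq> tw i ` D"
      proof
        fix d assume "d \<in> D"
        then obtain a where "a \<in> D" "tw i a = d" using right_surj[OF rp i] by blast
        then show "d \<in> tw i ` D" by blast
      qed
    qed
    then show "ring_automorphism_on D (tw i)"
      unfolding ring_automorphism_on_def bij_betw_def
      using tw_add tw_mult[OF i] tw_one[OF i] tw_inj[OF i] by blast
  qed
next
  assume a: "\<forall>i<n. ring_automorphism_on D (tw i)"
  have s: "\<forall>i<n. \<forall>d\<in>D. \<exists>a\<in>D. tw i a = d"
  proof (intro allI impI ballI)
    fix i d assume i: "i < n" and d: "d \<in> D"
    have "tw i ` D = D" using a i unfolding ring_automorphism_on_def bij_betw_def by blast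
    then have "d \<in> tw i ` D" using d by simp
    then show "\<exists>a\<in>D. tw i a = d" by blast
  qed
  show "right_polynomial D x n" unfolding right_polynomial_def
  proof
    fix f
    have "f \<in> RS" using RS_all[OF s] .
    then obtain c where c: "c \<in> CF" "f = rsum x n c" unfolding RS_def by blast
    then show "\<exists>!c. c \<in> CF \<and> f = rsum x n c" using rsum_inj by blast
  qed
qed

end

theorem mainTheorem12:
  fixes D :: "'a::ring_1 set" and x :: "nat \<Rightarrow> 'a" and n :: nat
    and le :: "(nat \<Rightarrow> nat) \<Rightarrow> (nat \<Rightarrow> nat) \<Rightarrow> bool"
  assumes "left_PBW D x n le"
  shows "right_polynomial D x n \<longleftrightarrow> (\<forall>i<n. ring_automorphism_on D (twist D x n i))"
proof (cases "(1::'a) = 0")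
  case False
  interpret lpbw D x n le using assms False by unfold_locales auto
  show ?thesis by (rule main_nontriv)
next
  case True
  have triv: "\<And>a::'a. a = 0"
  proof -
    fix a :: 'a
    have "a = a * 1" by simp
    also have "\<dots> = 0" using True by simp
    finally show "a = 0" .
  qed
  have z: "0 \<in> D" using assms unfolding left_PBW_def division_subring_def by blast
  have DD: "D = {0}" using z triv by blast
  have rp: "right_polynomial D x n"
    unfolding right_polynomial_def
  proof
    fix f :: 'a
    have h1: "(\<lambda>_. 0) \<in> coeff_fams D n" using z unfolding coeff_fams_def by simp
    have h2: "f = rsum x n (\<lambda>_. 0)" by (rule trans[OF triv triv[symmetric]])
    show "\<exists>!c. c \<in> coeff_fams D n \<and> f = rsum x n c"
    proof (rule ex1I[of _ "\<lambda>_. 0"])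
      show "(\<lambda>_. 0) \<in> coeff_fams D n \<and> f = rsum x n (\<lambda>_. 0)" using h1 h2 by (rule conjI)
    next
      fix c :: "(nat \<Rightarrow> nat) \<Rightarrow> 'a"
      show "c = (\<lambda>_. 0)" by (rule ext) (rule triv)
    qed
  qed
  have "ring_automorphism_on D (twist D x n i)" for i
  proof -
    have "twist D x n i 0 = 0" by (rule triv)
    moreover have "twist {0} x n i 1 = 1" by (rule trans[OF triv triv[symmetric]])
    ultimately show ?thesis unfolding ring_automorphism_on_def bij_betw_def inj_on_def DD
      by (auto intro: triv)
  qed
  then show ?thesis using rp by blast
qed

end
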